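(* If $\sigma$ and $\pi$ are permutations with the same number of descents, then $\mu(\sigma,\pi)=(-1)^{|\pi|-|\sigma|}\binom{\pi}{\sigma}_n$, where $\binom{\pi}{\sigma}_n$ is the number of normal embeddings of $\sigma$ in $\pi$.
   Context: A permutation of length $n$ is an arrangement $\pi=\pi_1\cdots\pi_n$ of $1,\dots,n$; $|\pi|$ denotes length. The permutation poset is ordered by pattern containment: $\sigma\le\pi$ if $\pi$ has a subsequence in the same relative order as $\sigma$. A descent of $\pi$ is an index $i$ with $\pi_i>\pi_{i+1}$. $\mu$ is the Möbius function of this poset: $\mu(a,a)=1$, $\mu(a,b)=-\sum_{a\le z<b}\mu(a,z)$ for $a<b$, $\mu(a,b)=0$ if $a\not\le b$. An embedding of $\sigma$ in $\pi$ is a sequence $\eta=\eta_1\cdots\eta_{|\pi|}$ of nonnegative integers such that the positions $i$ with $\eta_i\neq0$ form an occurrence of $\sigma$ in $\pi$ (the letters $\pi_i$ at these positions are in the same relative order as $\sigma$) and deleting the zeros from $\eta$ yields $\sigma$. (So embeddings correspond bijectively to occurrences.) An adjacency in $\pi$ is a maximal run of consecutive positions whose letters are consecutive increasing values $c,c+1,\dots$; its tail is all but its first letter. Equivalently, position $i\ge2$ is in the tail of an adjacency iff $\pi_i=\pi_{i-1}+1$. An embedding $\eta$ is normal if $\eta_i\neq0$ for every position $i$ of $\pi$ lying in the tail of an adjacency. *)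

theory Defs
  imports Main
begin

text \<open>Permutations are lists: a permutation of length n is an arrangement of 1..n.
  Positions are 0-indexed in the formalization.\<close>

definition is_perm :: "nat list \<Rightarrow> bool" where
  "is_perm xs \<longleftrightarrow> distinct xs \<and> set xs = {1..length xs}"

definition same_order :: "nat list \<Rightarrow> nat list \<Rightarrow> bool" where
  "same_order xs ys \<longleftrightarrow> length xs = length ys \<and>
     (\<forall>i<length xs. \<forall>j<length xs. (xs ! i < xs ! j) \<longleftrightarrow> (ys ! i < ys ! j))"

definition occurrence :: "nat list \<Rightarrow> nat list \<Rightarrow> nat set \<Rightarrow> bool" where
  "occurrence \<sigma> \<pi> I \<longleftrightarrow> I \<subseteq> {..<length \<pi>} \<and> same_order (nths \<pi> I) \<sigma>"

definition contains :: "nat list \<Rightarrow> nat list \<Rightarrow> bool" where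
  "contains \<sigma> \<pi> \<longleftrightarrow> (\<exists>I. occurrence \<sigma> \<pi> I)"

text \<open>The recursion sums over all
  permutations z with a \<le> z < b; since z < b forces length z < length b for
  permutations, the length guard below is vacuous and only serves termination.\<close>
function pmu :: "nat list \<Rightarrow> nat list \<Rightarrow> int" where
  "pmu a b = (if a = b then 1
     else if contains a b then
       - (\<Sum>z \<in> {z. is_perm z \<and> contains a z \<and> contains z b \<and> z \<noteq> b \<and> length z < length b}. pmu a z)
     else 0)"
  by auto
termination
  by (relation "measure (\<lambda>(a, b). length b)") auto

definition des :: "nat list \<Rightarrow> nat" where
  "des \<pi> = card {i. Suc i < length \<pi> \<and> \<pi> ! i > \<pi> ! Suc i}"

definition embeddings :: "nat list \<Rightarrow> nat list \<Rightarrow> nat list set" where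
  "embeddings \<sigma> \<pi> = {\<eta>. length \<eta> = length \<pi> \<and>
      occurrence \<sigma> \<pi> {i. i < length \<eta> \<and> \<eta> ! i \<noteq> 0} \<and>
      filter (\<lambda>x. x \<noteq> 0) \<eta> = \<sigma>}"

definition in_adj_tail :: "nat list \<Rightarrow> nat \<Rightarrow> bool" where
  "in_adj_tail \<pi> i \<longleftrightarrow> 0 < i \<and> i < length \<pi> \<and> \<pi> ! i = \<pi> ! (i - 1) + 1"

definition normal_embeddings :: "nat list \<Rightarrow> nat list \<Rightarrow> nat list set" where
  "normal_embeddings \<sigma> \<pi> = {\<eta> \<in> embeddings \<sigma> \<pi>. \<forall>i. in_adj_tail \<pi> i \<longrightarrow> \<eta> ! i \<noteq> 0}"

end

theory Submission
  imports Defs "HOL-Library.Sublist" "HOL-Library.Product_Lexorder"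
begin


lemma subseq_snoc_iff:
  "subseq u (x @ [a]) \<longleftrightarrow> subseq (if u \<noteq> [] \<and> last u = a then butlast u else u) x"
proof (cases u rule: rev_exhaust)
  case Nil then show ?thesis by simp
next
  case (snoc u' b)
  show ?thesis
  proof (cases "b = a")
    case True
    then show ?thesis using snoc by (simp add: subseq_append')
  next
    case False
    have "subseq (u'@[b]) (x@[a]) \<longleftrightarrow> subseq (u'@[b]) x"
    proof
      assume "subseq (u'@[b]) (x@[a])"
      then obtain xs1 xs2 where xs: "u'@[b] = xs1 @ xs2" "subseq xs1 x" "subseq xs2 [a]"
        unfolding subseq_append_iff by blast
      have "xs2 = [] \<or> xs2 = [a]" using xs(3)
        by (cases xs2) (auto split: if_splits)
      then show "subseq (u'@[b]) x"
      proof
        assume "xs2 = [a]" then show ?thesis using xs(1) False by simp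
      next
        assume "xs2 = []" then show ?thesis using xs by simp
      qed
    qed (rule subseq_rev_drop_many)
    then show ?thesis using snoc False by simp
  qed
qed

lemma snoc_eq_iff: "u \<noteq> [] \<Longrightarrow> (u = W @ [a]) \<longleftrightarrow> (butlast u = W \<and> last u = a)"
  by (metis append_butlast_last_id butlast_snoc last_snoc)

definition Tw :: "(nat \<Rightarrow> 'a) \<Rightarrow> nat \<Rightarrow> nat set" where
  "Tw l m = {v. 2 \<le> v \<and> v \<le> m \<and> l v = l (v - 1)}"

definition wd :: "(nat \<Rightarrow> 'a) \<Rightarrow> nat set \<Rightarrow> nat \<Rightarrow> 'a list" where
  "wd l U m = map l (filter (\<lambda>v. v \<in> U) [1..<Suc m])"

definition Phi :: "(nat \<Rightarrow> 'a) \<Rightarrow> nat \<Rightarrow> 'a list \<Rightarrow> int" where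
  "Phi l m u = (\<Sum>U\<in>Pow {1..m}. if Tw l m \<subseteq> U \<and> subseq u (wd l U m) then (-1::int)^(m - card U) else 0)"

lemma sum_Pow_insert:
  assumes "finite A" "a \<notin> A"
  shows "(\<Sum>U\<in>Pow (insert a A). f U) = (\<Sum>U\<in>Pow A. f U) + (\<Sum>U\<in>Pow A. f (insert a U))"
proof -
  have "(\<Sum>U\<in>Pow (insert a A). f U) = (\<Sum>U\<in>Pow A. f U) + (\<Sum>U\<in>insert a ` Pow A. f U)"
    unfolding Pow_insert using assms by (intro sum.union_disjoint) auto
  moreover have "(\<Sum>U\<in>insert a ` Pow A. f U) = (\<Sum>U\<in>Pow A. f (insert a U))"
    using assms by (intro sum.reindex_cong[where l="insert a"]) (auto simp: inj_on_def)
  ultimately show ?thesis by simp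
qed

lemma wd_Suc_notin: "U \<subseteq> {1..m} \<Longrightarrow> wd l U (Suc m) = wd l U m"
  unfolding wd_def by auto

lemma wd_Suc_in: "U \<subseteq> {1..m} \<Longrightarrow> wd l (insert (Suc m) U) (Suc m) = wd l U m @ [l (Suc m)]"
proof -
  have "filter (\<lambda>v. v \<in> insert (Suc m) U) [1..<Suc m] = filter (\<lambda>v. v \<in> U) [1..<Suc m]"
    by (rule filter_cong) auto
  then show ?thesis unfolding wd_def by simp
qed

lemma Phi_eq: "Phi l m u = (if u = map l [1..<Suc m] then 1 else 0)"
proof (induction m arbitrary: u)
  case 0
  then show ?case by (simp add: Phi_def Tw_def wd_def)
next
  case (Suc m)
  define a where "a = l (Suc m)"
  define W where "W = map l [1..<Suc m]"
  define p where "p = (if u \<noteq> [] \<and> last u = a then butlast u else u)"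
  have WS: "map l [1..<Suc (Suc m)] = W @ [a]" by (simp add: W_def a_def)
  have ins: "insert (Suc m) {1..m} = {1..Suc m}" by auto
  let ?f = "\<lambda>U. if Tw l (Suc m) \<subseteq> U \<and> subseq u (wd l U (Suc m)) then (-1::int)^(Suc m - card U) else 0"
  have split: "Phi l (Suc m) u = (\<Sum>U\<in>Pow {1..m}. ?f U) + (\<Sum>U\<in>Pow {1..m}. ?f (insert (Suc m) U))"
    unfolding Phi_def ins[symmetric] by (rule sum_Pow_insert) auto
  show ?case
  proof (cases "m \<ge> 1 \<and> a = l m")
    case True
    have T: "Tw l (Suc m) = insert (Suc m) (Tw l m)"
      using True by (auto simp: Tw_def a_def)
    have A: "(\<Sum>U\<in>Pow {1..m}. ?f U) = 0"
      by (intro sum.neutral) (auto simp: T)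
    have B: "(\<Sum>U\<in>Pow {1..m}. ?f (insert (Suc m) U)) = Phi l m p"
      unfolding Phi_def
    proof (intro sum.cong refl)
      fix U assume U: "U \<in> Pow {1..m}"
      then have fin: "finite U" "Suc m \<notin> U" using finite_subset by auto
      have "Tw l m \<subseteq> {1..m}" by (auto simp: Tw_def)
      then have "Tw l (Suc m) \<subseteq> insert (Suc m) U \<longleftrightarrow> Tw l m \<subseteq> U" using U T by auto
      moreover have "subseq u (wd l (insert (Suc m) U) (Suc m)) \<longleftrightarrow> subseq p (wd l U m)"
        using U by (simp add: wd_Suc_in subseq_snoc_iff p_def a_def)
      moreover have "card (insert (Suc m) U) = Suc (card U)" using fin by simp
      ultimately show "?f (insert (Suc m) U) = (if Tw l m \<subseteq> U \<and> subseq p (wd l U m) then (-1::int)^(m - card U) else 0)"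
        by simp
    qed
    have lW: "W \<noteq> [] \<and> last W = a" using True by (simp add: W_def a_def)
    have "p = W \<longleftrightarrow> u = W @ [a]"
    proof (cases "u = []")
      case True then show ?thesis using lW by (auto simp add: p_def)
    next
      case False
      show ?thesis
      proof (cases "last u = a")
        case True then show ?thesis using \<open>u \<noteq> []\<close> by (simp add: p_def snoc_eq_iff)
      next
        case F2: False
        then have "u \<noteq> W" using lW by auto
        then show ?thesis using \<open>u \<noteq> []\<close> F2 by (simp add: p_def snoc_eq_iff)
      qed
    qed
    then have "(if p = W then 1 else 0) = (if u = W @ [a] then (1::int) else 0)" by simp
    moreover have "Phi l m p = (if p = W then 1 else 0)" using Suc.IH[of p] unfolding W_def .
    ultimately have "Phi l (Suc m) u = (if u = W @ [a] then 1 else 0)" using split A B by (simp only: add_0)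
    then show ?thesis unfolding WS .
  next
    case False
    have T: "Tw l (Suc m) = Tw l m"
      using False unfolding Tw_def a_def by (auto simp: le_Suc_eq)
    have A: "(\<Sum>U\<in>Pow {1..m}. ?f U) = - Phi l m u"
      unfolding Phi_def sum_negf[symmetric]
    proof (intro sum.cong refl)
      fix U assume U: "U \<in> Pow {1..m}"
      then have "card U \<le> m" using card_mono[of "{1..m}" U] by auto
      then have "(-1::int)^(Suc m - card U) = -((-1::int)^(m - card U))"
        by (simp add: Suc_diff_le)
      then show "?f U = -(if Tw l m \<subseteq> U \<and> subseq u (wd l U m) then (-1::int)^(m - card U) else 0)"
        using U by (simp add: T wd_Suc_notin)
    qed
    have B: "(\<Sum>U\<in>Pow {1..m}. ?f (insert (Suc m) U)) = Phi l m p"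
      unfolding Phi_def
    proof (intro sum.cong refl)
      fix U assume U: "U \<in> Pow {1..m}"
      then have fin: "finite U" "Suc m \<notin> U" using finite_subset by auto
      have "Tw l m \<subseteq> {1..m}" by (auto simp: Tw_def)
      then have "Tw l (Suc m) \<subseteq> insert (Suc m) U \<longleftrightarrow> Tw l m \<subseteq> U" using U T by auto
      moreover have "subseq u (wd l (insert (Suc m) U) (Suc m)) \<longleftrightarrow> subseq p (wd l U m)"
        using U by (simp add: wd_Suc_in subseq_snoc_iff p_def a_def)
      moreover have "card (insert (Suc m) U) = Suc (card U)" using fin by simp
      ultimately show "?f (insert (Suc m) U) = (if Tw l m \<subseteq> U \<and> subseq p (wd l U m) then (-1::int)^(m - card U) else 0)"
        by simp
    qed
    have lW: "W = [] \<or> last W \<noteq> a" using False by (auto simp: W_def a_def)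
    have "(if p = W then 1 else 0) - (if u = W then 1 else 0) = (if u = W @ [a] then (1::int) else 0)"
    proof (cases "u \<noteq> [] \<and> last u = a")
      case True
      then have "u \<noteq> W" using lW by auto
      moreover have "p = W \<longleftrightarrow> u = W @ [a]" using True by (simp add: p_def snoc_eq_iff)
      ultimately show ?thesis by simp
    next
      case False
      then have "p = u" unfolding p_def by (rule if_not_P)
      moreover have "u \<noteq> W @ [a]" using False by auto
      ultimately show ?thesis by simp
    qed
    moreover have "Phi l m p = (if p = W then 1 else 0)" using Suc.IH[of p] unfolding W_def .
    moreover have "Phi l m u = (if u = W then 1 else 0)" using Suc.IH[of u] unfolding W_def .
    ultimately have "Phi l (Suc m) u = (if u = W @ [a] then 1 else 0)" using split A B by (simp only: add.commute diff_conv_add_uminus)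
    then show ?thesis unfolding WS .
  qed
qed



lemma so_refl: "same_order x x" by (simp add: same_order_def)
lemma so_sym: "same_order x y \<Longrightarrow> same_order y x" by (simp add: same_order_def)
lemma so_trans: "same_order x y \<Longrightarrow> same_order y z \<Longrightarrow> same_order x z"
  by (simp add: same_order_def)
lemma so_length: "same_order x y \<Longrightarrow> length x = length y" by (simp add: same_order_def)

lemma so_map:
  assumes "\<And>a b. a \<in> set xs \<Longrightarrow> b \<in> set xs \<Longrightarrow> a < b \<Longrightarrow> g a < g b"
  shows "same_order xs (map g xs)"
  unfolding same_order_def
proof (intro conjI allI impI)
  fix i j assume i: "i < length xs" and j: "j < length xs"
  have a: "xs!i \<in> set xs" "xs!j \<in> set xs" using i j by auto
  show "(xs ! i < xs ! j) = (map g xs ! i < map g xs ! j)"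
  proof (cases rule: linorder_cases[of "xs!i" "xs!j"])
    case less then show ?thesis using assms[OF a] i j by simp
  next
    case equal then show ?thesis using i j by simp
  next
    case greater then show ?thesis using assms[OF a(2) a(1)] i j by simp
  qed
qed simp

definition posn :: "nat list \<Rightarrow> nat \<Rightarrow> nat" where
  "posn x v = (THE i. i < length x \<and> x ! i = v)"

lemma posn_nth: "distinct x \<Longrightarrow> i < length x \<Longrightarrow> posn x (x ! i) = i"
  unfolding posn_def by (rule the_equality) (auto simp: nth_eq_iff_index_eq)

lemma posn_in: "distinct x \<Longrightarrow> v \<in> set x \<Longrightarrow> posn x v < length x \<and> x ! posn x v = v"
proof -
  assume d: "distinct x" and v: "v \<in> set x"
  then obtain i where i: "i < length x" "x ! i = v" by (auto simp: in_set_conv_nth)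
  then show ?thesis using posn_nth[OF d i(1)] by simp
qed

lemma so_ex_map:
  assumes "distinct xs" "same_order xs ys"
  shows "\<exists>g. (\<forall>a\<in>set xs. \<forall>b\<in>set xs. a < b \<longrightarrow> g a < g b) \<and> ys = map g xs"
proof -
  define g where "g v = ys ! posn xs v" for v
  have len: "length ys = length xs" using assms(2) by (simp add: same_order_def)
  have "ys = map g xs"
    by (rule nth_equalityI) (auto simp: len g_def posn_nth assms(1))
  moreover have "\<forall>a\<in>set xs. \<forall>b\<in>set xs. a < b \<longrightarrow> g a < g b"
  proof (intro ballI impI)
    fix a b assume a: "a \<in> set xs" and b: "b \<in> set xs" and ab: "a < b"
    have pa: "posn xs a < length xs" "xs ! posn xs a = a" using posn_in[OF assms(1) a] by auto
    have pb: "posn xs b < length xs" "xs ! posn xs b = b" using posn_in[OF assms(1) b] by auto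
    have "xs ! posn xs a < xs ! posn xs b" using pa pb ab by simp
    moreover have "(xs ! posn xs a < xs ! posn xs b) = (ys ! posn xs a < ys ! posn xs b)"
      using assms(2) pa(1) pb(1) unfolding same_order_def by simp
    ultimately show "g a < g b" unfolding g_def by simp
  qed
  ultimately show ?thesis by (intro exI[of _ g]) simp
qed

lemma so_nths:
  assumes "distinct xs" "same_order xs ys"
  shows "same_order (nths xs K) (nths ys K)"
proof -
  obtain g where g: "\<forall>a\<in>set xs. \<forall>b\<in>set xs. a < b \<longrightarrow> g a < g b" "ys = map g xs"
    using so_ex_map[OF assms] by blast
  show ?thesis unfolding g(2) nths_map
  proof (rule so_map)
    fix a b assume ab: "a \<in> set (nths xs K)" "b \<in> set (nths xs K)" "a < b"
    then have "a \<in> set xs" "b \<in> set xs" using in_set_nthsD by fast+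
    then show "g a < g b" using g(1) ab(3) by simp
  qed
qed

lemma perm_nth_card:
  assumes "is_perm x" "i < length x"
  shows "x ! i = card {j. j < length x \<and> x ! j \<le> x ! i}"
proof -
  have d: "distinct x" and s: "set x = {1..length x}" using assms(1) by (auto simp: is_perm_def)
  have "(!) x ` {j. j < length x \<and> x ! j \<le> x ! i} = {v \<in> set x. v \<le> x ! i}"
    by (auto simp: in_set_conv_nth)
  also have "\<dots> = {1..x ! i}" using s assms(2) nth_mem[OF assms(2)] by auto
  finally have "card ((!) x ` {j. j < length x \<and> x ! j \<le> x ! i}) = x ! i" by simp
  moreover have "inj_on ((!) x) {j. j < length x \<and> x ! j \<le> x ! i}"
    using d by (auto simp: inj_on_def nth_eq_iff_index_eq)
  ultimately show ?thesis by (simp add: card_image)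
qed

lemma so_perm_eq:
  assumes "is_perm x" "is_perm y" "same_order x y"
  shows "x = y"
proof (rule nth_equalityI)
  show len: "length x = length y" using assms(3) by (simp add: same_order_def)
  fix i assume i: "i < length x"
  have "{j. j < length x \<and> x ! j \<le> x ! i} = {j. j < length y \<and> y ! j \<le> y ! i}"
    using assms(3) i len unfolding same_order_def by (auto simp: not_less[symmetric])
  then show "x ! i = y ! i"
    using perm_nth_card[OF assms(1) i] perm_nth_card[OF assms(2)] i len by simp
qed

lemma nths_cong_len: "(\<And>i. i < length xs \<Longrightarrow> i \<in> A \<longleftrightarrow> i \<in> B) \<Longrightarrow> nths xs A = nths xs B"
proof (induction xs arbitrary: A B)
  case Nil then show ?case by simp
next
  case (Cons x xs)
  have "nths xs {j. Suc j \<in> A} = nths xs {j. Suc j \<in> B}"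
    by (rule Cons.IH) (use Cons.prems in auto)
  moreover have "0 \<in> A \<longleftrightarrow> 0 \<in> B" using Cons.prems by auto
  ultimately show ?case by (simp add: nths_Cons)
qed

lemma nths_distinct_filter:
  assumes "distinct xs"
  shows "nths xs K = filter (\<lambda>v. v \<in> (!) xs ` (K \<inter> {..<length xs})) xs"
proof -
  have "filter (\<lambda>v. v \<in> (!) xs ` (K \<inter> {..<length xs})) xs
      = nths xs {i. i < length xs \<and> xs ! i \<in> (!) xs ` (K \<inter> {..<length xs})}"
    by (rule filter_eq_nths)
  also have "\<dots> = nths xs K"
    by (rule nths_cong_len) (use assms in \<open>auto simp: nth_eq_iff_index_eq\<close>)
  finally show ?thesis by simp
qed

lemma ex_nths_filter:
  assumes "distinct xs"
  shows "(\<exists>K. P (nths xs K)) \<longleftrightarrow> (\<exists>W. P (filter (\<lambda>v. v \<in> W) xs))"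
proof
  assume "\<exists>K. P (nths xs K)"
  then obtain K where "P (nths xs K)" by blast
  then show "\<exists>W. P (filter (\<lambda>v. v \<in> W) xs)" unfolding nths_distinct_filter[OF assms] by blast
next
  assume "\<exists>W. P (filter (\<lambda>v. v \<in> W) xs)"
  then obtain W where "P (filter (\<lambda>v. v \<in> W) xs)" by blast
  then show "\<exists>K. P (nths xs K)" unfolding filter_eq_nths by blast
qed

lemma nths_pos:
  "\<exists>q. (\<forall>m<length (nths xs I). q m < length xs \<and> q m \<in> I \<and> nths xs I ! m = xs ! q m) \<and>
       (\<forall>m m'. m < m' \<longrightarrow> m' < length (nths xs I) \<longrightarrow> q m < q m')"
proof (induction xs arbitrary: I)
  case Nil then show ?case by simp
next
  case (Cons x xs)
  obtain q where q: "\<forall>m<length (nths xs {j. Suc j \<in> I}). q m < length xs \<and> q m \<in> {j. Suc j \<in> I} \<and>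
      nths xs {j. Suc j \<in> I} ! m = xs ! q m"
    "\<forall>m m'. m < m' \<longrightarrow> m' < length (nths xs {j. Suc j \<in> I}) \<longrightarrow> q m < q m'"
    using Cons.IH by blast
  show ?case
  proof (cases "0 \<in> I")
    case True
    define q' where "q' m = (case m of 0 \<Rightarrow> 0 | Suc m \<Rightarrow> Suc (q m))" for m
    have A: "\<forall>m<length (nths (x # xs) I). q' m < length (x # xs) \<and> q' m \<in> I \<and> nths (x # xs) I ! m = (x # xs) ! q' m"
    proof (intro allI impI)
      fix m assume "m < length (nths (x # xs) I)"
      then show "q' m < length (x # xs) \<and> q' m \<in> I \<and> nths (x # xs) I ! m = (x # xs) ! q' m"
        using q True by (cases m) (auto simp: nths_Cons q'_def)
    qed
    have B: "\<forall>m m'. m < m' \<longrightarrow> m' < length (nths (x # xs) I) \<longrightarrow> q' m < q' m'"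
    proof (intro allI impI)
      fix m m' assume "m < m'" "m' < length (nths (x # xs) I)"
      then show "q' m < q' m'"
        using q True by (cases m; cases m') (auto simp: nths_Cons q'_def)
    qed
    show ?thesis by (rule exI[of _ q'], rule conjI[OF A B])
  next
    case False
    have A: "\<forall>m<length (nths (x # xs) I). Suc (q m) < length (x # xs) \<and> Suc (q m) \<in> I \<and> nths (x # xs) I ! m = (x # xs) ! Suc (q m)"
      using q False by (auto simp: nths_Cons)
    have B: "\<forall>m m'. m < m' \<longrightarrow> m' < length (nths (x # xs) I) \<longrightarrow> Suc (q m) < Suc (q m')"
      using q False by (auto simp: nths_Cons)
    show ?thesis by (rule exI[of _ "\<lambda>m. Suc (q m)"], rule conjI[OF A B])
  qed
qed



definition dl :: "nat list \<Rightarrow> nat \<Rightarrow> nat" where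
  "dl x i = card {j. j < i \<and> Suc j < length x \<and> x ! Suc j < x ! j}"

lemma dl_fin: "finite {j. j < i \<and> Suc j < length x \<and> x ! Suc j < x ! j}"
  by (rule finite_subset[of _ "{..<i}"]) auto

lemma des_dl: "des x = dl x (length x)"
  unfolding des_def dl_def by (rule arg_cong[where f=card]) auto

lemma dl_mono: "i \<le> j \<Longrightarrow> dl x i \<le> dl x j"
  unfolding dl_def by (rule card_mono[OF dl_fin]) auto

lemma dl_0: "dl x 0 = 0" by (simp add: dl_def)

lemma dl_Suc: "dl x (Suc i) = dl x i + (if Suc i < length x \<and> x ! Suc i < x ! i then 1 else 0)"
proof (cases "Suc i < length x \<and> x ! Suc i < x ! i")
  case True
  have "{j. j < Suc i \<and> Suc j < length x \<and> x ! Suc j < x ! j}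
      = insert i {j. j < i \<and> Suc j < length x \<and> x ! Suc j < x ! j}"
    using True by auto
  then show ?thesis using True dl_fin[of i x] unfolding dl_def by simp
next
  case False
  have "{j. j < Suc i \<and> Suc j < length x \<and> x ! Suc j < x ! j}
      = {j. j < i \<and> Suc j < length x \<and> x ! Suc j < x ! j}"
    using False by (auto simp: less_Suc_eq)
  then show ?thesis using False unfolding dl_def by simp
qed

lemma dl_le_des: "dl x i \<le> des x"
  unfolding des_dl dl_def by (rule card_mono[OF dl_fin]) auto

lemma des_last: "x \<noteq> [] \<Longrightarrow> des x = dl x (length x - 1)"
  using dl_Suc[of x "length x - 1"] by (simp add: des_dl)

lemma dl_eq_inc:
  assumes "distinct x" "j < length x"
  shows "i < j \<Longrightarrow> dl x i = dl x j \<Longrightarrow> x ! i < x ! j"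
  using assms(2)
proof (induction j)
  case 0 then show ?case by simp
next
  case (Suc j)
  have "dl x i \<le> dl x j" using Suc.prems(1) by (intro dl_mono) simp
  moreover have "dl x j \<le> dl x (Suc j)" by (rule dl_mono) simp
  ultimately have e: "dl x j = dl x (Suc j)" using Suc.prems(2) by simp
  then have "\<not> x ! Suc j < x ! j" using dl_Suc[of x j] Suc.prems(3) by (simp split: if_splits)
  moreover have "x ! Suc j \<noteq> x ! j" using assms(1) Suc.prems(3) by (simp add: nth_eq_iff_index_eq)
  ultimately have jj: "x ! j < x ! Suc j" by simp
  show ?case
  proof (cases "i = j")
    case True then show ?thesis using jj by simp
  next
    case False
    then have "i < j" using Suc.prems(1) by simp
    then have "x ! i < x ! j" using Suc.IH Suc.prems e by simp
    then show ?thesis using jj by simp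
  qed
qed

lemma dl_desc:
  assumes "distinct x" "i < j" "j < length x" "x ! j < x ! i"
  shows "dl x i < dl x j"
proof -
  have "dl x i \<le> dl x j" using assms(2) by (intro dl_mono) simp
  moreover have "dl x i \<noteq> dl x j" using dl_eq_inc[OF assms(1,3,2)] assms(4) by auto
  ultimately show ?thesis by simp
qed

lemma so_dl: "same_order y z \<Longrightarrow> dl y i = dl z i"
  unfolding dl_def same_order_def by (rule arg_cong[where f=card]) auto

lemma so_des: "same_order y z \<Longrightarrow> des y = des z"
  using so_dl[of y z] so_length[of y z] by (simp add: des_dl)

lemma sub_dl:
  assumes d: "distinct x"
    and q1: "\<forall>m<length y. q m < length x \<and> y ! m = x ! q m"
    and q2: "\<forall>m m'. m < m' \<longrightarrow> m' < length y \<longrightarrow> q m < q m'"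
  shows "m \<le> m' \<Longrightarrow> m' < length y \<Longrightarrow> dl y m' + dl x (q m) \<le> dl y m + dl x (q m')"
proof (induction m')
  case 0 then show ?case by simp
next
  case (Suc m')
  show ?case
  proof (cases "m = Suc m'")
    case True then show ?thesis by simp
  next
    case False
    then have mm: "m \<le> m'" using Suc.prems by simp
    have IH: "dl y m' + dl x (q m) \<le> dl y m + dl x (q m')" using Suc.IH mm Suc.prems by simp
    have qq: "q m' < q (Suc m')" "q (Suc m') < length x" using q1 q2 Suc.prems by auto
    have step: "dl y (Suc m') + dl x (q m') \<le> dl y m' + dl x (q (Suc m'))"
    proof (cases "y ! Suc m' < y ! m'")
      case True
      then have "x ! q (Suc m') < x ! q m'" using q1 Suc.prems by simp
      then have "dl x (q m') < dl x (q (Suc m'))" using dl_desc[OF d qq] by simp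
      then show ?thesis using dl_Suc[of y m'] by simp
    next
      case False
      have "dl x (q m') \<le> dl x (q (Suc m'))" using qq by (intro dl_mono) simp
      then show ?thesis using dl_Suc[of y m'] False by simp
    qed
    show ?thesis using IH step by simp
  qed
qed

lemma sub_des:
  assumes d: "distinct x"
    and q1: "\<forall>m<length y. q m < length x \<and> y ! m = x ! q m"
    and q2: "\<forall>m m'. m < m' \<longrightarrow> m' < length y \<longrightarrow> q m < q m'"
  shows "des y \<le> des x" and "des y = des x \<Longrightarrow> m < length y \<Longrightarrow> dl x (q m) = dl y m"
proof -
  show "des y \<le> des x"
  proof (cases "y = []")
    case True then show ?thesis by (simp add: des_def)
  next
    case False
    let ?L = "length y - 1"
    have "dl y ?L + dl x (q 0) \<le> dl y 0 + dl x (q ?L)"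
      using sub_dl[OF assms, of 0 ?L] False by simp
    then have "des y \<le> dl x (q ?L)" using des_last[OF False] dl_0[of y] by simp
    then show ?thesis using dl_le_des[of x "q ?L"] by simp
  qed
  assume e: "des y = des x" and m: "m < length y"
  then have ne: "y \<noteq> []" by auto
  let ?L = "length y - 1"
  have a: "dl y ?L + dl x (q m) \<le> dl y m + dl x (q ?L)"
    using sub_dl[OF assms, of m ?L] m by simp
  have b: "dl y m + dl x (q 0) \<le> dl y 0 + dl x (q m)"
    using sub_dl[OF assms, of 0 m] m by simp
  have "dl x (q ?L) \<le> des x" by (rule dl_le_des)
  then show "dl x (q m) = dl y m" using a b e des_last[OF ne] dl_0[of y] by simp
qed

lemma des_nths: "distinct x \<Longrightarrow> des (nths x I) \<le> des x"
  using nths_pos[of x I] sub_des(1) by blast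

lemma des_nths_eq: "distinct x \<Longrightarrow> des (nths x I) = des x \<Longrightarrow>
   \<exists>q. (\<forall>m<length (nths x I). q m < length x \<and> nths x I ! m = x ! q m \<and> dl x (q m) = dl (nths x I) m)"
proof -
  assume d: "distinct x" and e: "des (nths x I) = des x"
  obtain q where q: "\<forall>m<length (nths x I). q m < length x \<and> q m \<in> I \<and> nths x I ! m = x ! q m"
    "\<forall>m m'. m < m' \<longrightarrow> m' < length (nths x I) \<longrightarrow> q m < q m'"
    using nths_pos[of x I] by blast
  have q1: "\<forall>m<length (nths x I). q m < length x \<and> nths x I ! m = x ! q m" using q(1) by blast
  show ?thesis using sub_des(2)[OF d q1 q(2) e] q1 by (intro exI[of _ q]) simp
qed



lemma perm_distinct: "is_perm x \<Longrightarrow> distinct x" by (simp add: is_perm_def)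
lemma perm_set: "is_perm x \<Longrightarrow> set x = {1..length x}" by (simp add: is_perm_def)

lemma contains_des: "contains a b \<Longrightarrow> distinct b \<Longrightarrow> des a \<le> des b"
  unfolding contains_def occurrence_def
  using so_des des_nths by (metis so_sym)

lemma length_nths_sub: "I \<subseteq> {..<length b} \<Longrightarrow> length (nths b I) = card I"
  by (simp add: length_nths) (metis (no_types, lifting) Collect_cong inf.absorb_iff2 Int_def lessThan_iff)

lemma contains_len: "contains a b \<Longrightarrow> length a \<le> length b"
proof -
  assume "contains a b"
  then obtain I where I: "I \<subseteq> {..<length b}" "same_order (nths b I) a"
    unfolding contains_def occurrence_def by blast
  have "length a = card I" using so_length[OF I(2)] length_nths_sub[OF I(1)] by simp
  also have "\<dots> \<le> length b" using card_mono[OF _ I(1)] by simp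
  finally show ?thesis .
qed

lemma contains_refl: "contains x x"
  unfolding contains_def occurrence_def
  by (rule exI[of _ "{..<length x}"]) (simp add: so_refl)

lemma contains_trans:
  assumes "contains a b" "contains b c" "distinct c"
  shows "contains a c"
proof -
  obtain I where I: "I \<subseteq> {..<length b}" "same_order (nths b I) a"
    using assms(1) unfolding contains_def occurrence_def by blast
  obtain J where J: "J \<subseteq> {..<length c}" "same_order (nths c J) b"
    using assms(2) unfolding contains_def occurrence_def by blast
  have "same_order (nths (nths c J) I) (nths b I)"
    by (rule so_nths[OF _ J(2)]) (simp add: assms(3))
  then have so: "same_order (nths c {i \<in> J. \<exists>j\<in>I. card {i' \<in> J. i' < i} = j}) a"
    unfolding nths_nths using I(2) so_trans by blast
  show ?thesis unfolding contains_def occurrence_def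
    by (rule exI, rule conjI[OF _ so]) (use J(1) in auto)
qed

lemma contains_so:
  assumes "same_order x w" "contains z w" "distinct x"
  shows "contains z x"
proof -
  obtain I where I: "I \<subseteq> {..<length w}" "same_order (nths w I) z"
    using assms(2) unfolding contains_def occurrence_def by blast
  have "same_order (nths x I) (nths w I)" by (rule so_nths[OF assms(3,1)])
  then have "same_order (nths x I) z" using I(2) so_trans by blast
  moreover have "I \<subseteq> {..<length x}" using I(1) so_length[OF assms(1)] by simp
  ultimately show ?thesis unfolding contains_def occurrence_def by blast
qed

lemma contains_eq:
  assumes "contains a b" "is_perm a" "is_perm b" "length a = length b"
  shows "a = b"
proof -
  obtain I where I: "I \<subseteq> {..<length b}" "same_order (nths b I) a"
    using assms(1) unfolding contains_def occurrence_def by blast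
  have "card I = length b" using so_length[OF I(2)] length_nths_sub[OF I(1)] assms(4) by simp
  then have "I = {..<length b}" using card_subset_eq[OF _ I(1)] by simp
  then have "same_order b a" using I(2) by simp
  then show ?thesis using so_perm_eq assms(2,3) so_sym by metis
qed

lemma contains_lt:
  "contains a b \<Longrightarrow> is_perm a \<Longrightarrow> is_perm b \<Longrightarrow> a \<noteq> b \<Longrightarrow> length a < length b"
  using contains_eq contains_len le_neq_implies_less by blast

definition lab :: "nat list \<Rightarrow> nat \<Rightarrow> nat" where
  "lab x v = dl x (posn x v)"

lemma lab_nth: "distinct x \<Longrightarrow> i < length x \<Longrightarrow> lab x (x ! i) = dl x i"
  by (simp add: lab_def posn_nth)

lemma key_sorted:
  assumes "distinct x"
  shows "sorted_wrt (\<lambda>a b. (lab x a, a) < (lab x b, b)) x"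
  unfolding sorted_wrt_iff_nth_less
proof (intro allI impI)
  fix i j assume ij: "i < j" "j < length x"
  have "dl x i \<le> dl x j" using ij by (intro dl_mono) simp
  moreover have "dl x i = dl x j \<Longrightarrow> x ! i < x ! j" using dl_eq_inc[OF assms ij(2) ij(1)] by simp
  ultimately have "(dl x i, x ! i) < (dl x j, x ! j)" by (cases "dl x i = dl x j") auto
  then show "(lab x (x ! i), x ! i) < (lab x (x ! j), x ! j)"
    using lab_nth[OF assms] ij by simp
qed



declare upt_Suc[simp del]

lemma core:
  assumes pp: "is_perm \<pi>" and pz: "is_perm z" and dd: "des z = des \<pi>"
  shows "same_order (filter (\<lambda>v. v \<in> U) \<pi>) z \<longleftrightarrow>
         map (lab z) [1..<Suc (length z)] = map (lab \<pi>) (filter (\<lambda>v. v \<in> U) [1..<Suc (length \<pi>)])"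
proof -
  define n where "n = length \<pi>"
  define k where "k = length z"
  define y where "y = filter (\<lambda>v. v \<in> U) \<pi>"
  define s where "s = filter (\<lambda>v. v \<in> U) [1..<Suc n]"
  have dp: "distinct \<pi>" and sp: "set \<pi> = {1..n}" using pp by (auto simp: is_perm_def n_def)
  have dz: "distinct z" and sz: "set z = {1..k}" using pz by (auto simp: is_perm_def k_def)
  have dy: "distinct y" using dp by (simp add: y_def)
  have ds: "distinct s" by (simp add: s_def)
  have sy: "set y = U \<inter> {1..n}" using sp by (auto simp: y_def)
  have ss: "set s = U \<inter> {1..n}" by (auto simp: s_def)
  have lys: "length y = length s" using distinct_card[OF dy] distinct_card[OF ds] sy ss by simp
  have sts: "sorted_wrt (<) s" unfolding s_def by (rule sorted_wrt_filter, rule sorted_wrt_upt)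
  have ks: "sorted_wrt (\<lambda>a b. (lab \<pi> a, a) < (lab \<pi> b, b)) y"
    unfolding y_def by (rule sorted_wrt_filter, rule key_sorted[OF dp])
  have kz: "sorted_wrt (\<lambda>a b. (lab z a, a) < (lab z b, b)) z" by (rule key_sorted[OF dz])
  show ?thesis unfolding y_def[symmetric] s_def[symmetric] n_def[symmetric] k_def[symmetric]
  proof
    assume so: "same_order y z"
    obtain g where g: "\<forall>a\<in>set y. \<forall>b\<in>set y. a < b \<longrightarrow> g a < g b" "z = map g y"
      using so_ex_map[OF dy so] by blast
    have ky: "k = length y" using so_length[OF so] k_def by simp
    have "sorted_wrt (\<lambda>a b. g a < g b) s"
      by (rule sorted_wrt_mono_rel[OF _ sts]) (use g(1) sy ss in auto)
    then have sgs: "sorted_wrt (<) (map g s)" by (simp add: sorted_wrt_map)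
    have "set (map g s) = set z" using g(2) sy ss by simp
    then have st: "set (map g s) = set [1..<Suc k]" using sz by (simp only: set_upt atLeastLessThanSuc_atLeastAtMost)
    have mgs: "map g s = [1..<Suc k]"
      using strict_sorted_equal[OF sorted_wrt_upt[of 1 "Suc k"] sgs st] .
    have "\<forall>v\<in>set s. lab z (g v) = lab \<pi> v"
    proof
      fix v assume "v \<in> set s"
      then have "v \<in> set y" using sy ss by simp
      then obtain m where m: "m < length y" "y ! m = v" by (auto simp: in_set_conv_nth)
      have "g v = z ! m" using g(2) m by simp
      then have "lab z (g v) = dl z m" using lab_nth[OF dz] m ky k_def by simp
      also have "\<dots> = dl y m" using so_dl[OF so] by simp
      finally have A: "lab z (g v) = dl y m" .
      have yn: "y = nths \<pi> {i. i < length \<pi> \<and> \<pi> ! i \<in> U}" unfolding y_def by (rule filter_eq_nths)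
      have "des y = des \<pi>" using so_des[OF so] dd by simp
      then obtain q where q: "\<forall>m<length y. q m < length \<pi> \<and> y ! m = \<pi> ! q m \<and> dl \<pi> (q m) = dl y m"
        using des_nths_eq[OF dp, of "{i. i < length \<pi> \<and> \<pi> ! i \<in> U}"] yn by auto
      have "lab \<pi> v = dl \<pi> (q m)" using q m lab_nth[OF dp] by auto
      then show "lab z (g v) = lab \<pi> v" using A q m by simp
    qed
    then have "map (lab z) (map g s) = map (lab \<pi>) s" by simp
    then show "map (lab z) [1..<Suc k] = map (lab \<pi>) s" using mgs by simp
  next
    assume eq: "map (lab z) [1..<Suc k] = map (lab \<pi>) s"
    have ks': "length s = k" using arg_cong[OF eq, of length] by simp
    define g where "g v = Suc (posn s v)" for v
    have gs: "r < k \<Longrightarrow> g (s ! r) = Suc r" for r using posn_nth[OF ds] ks' by (simp add: g_def)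
    have glab: "lab z (g v) = lab \<pi> v" if v: "v \<in> set s" for v
    proof -
      obtain r where r: "r < k" "s ! r = v" using v ks' by (auto simp: in_set_conv_nth)
      have "map (lab z) [1..<Suc k] ! r = map (lab \<pi>) s ! r" using eq by simp
      then have "lab z (Suc r) = lab \<pi> (s ! r)" using r ks' by simp
      then show ?thesis using gs[OF r(1)] r by simp
    qed
    have gmono: "g a < g b" if a: "a \<in> set s" and b: "b \<in> set s" and ab: "a < b" for a b
    proof -
      obtain i where i: "i < k" "s ! i = a" using a ks' by (auto simp: in_set_conv_nth)
      obtain j where j: "j < k" "s ! j = b" using b ks' by (auto simp: in_set_conv_nth)
      have "i < j"
      proof (rule ccontr)
        assume "\<not> i < j"
        then have "j \<le> i" by simp
        have "s ! j \<le> s ! i"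
        proof (cases "j = i")
          case True then show ?thesis by simp
        next
          case False
          then have "j < i" using \<open>j \<le> i\<close> by simp
          then have "s ! j < s ! i" using sts i(1) ks' unfolding sorted_wrt_iff_nth_less by blast
          then show ?thesis by simp
        qed
        then show False using i j ab by simp
      qed
      then show ?thesis using gs[OF i(1)] gs[OF j(1)] i(2) j(2) by simp
    qed
    have gimg: "g ` set s = {1..k}"
    proof
      show "g ` set s \<subseteq> {1..k}"
      proof
        fix t assume "t \<in> g ` set s"
        then obtain v where v: "v \<in> set s" "t = g v" by blast
        then obtain r where r: "r < k" "s ! r = v" using ks' by (auto simp: in_set_conv_nth)
        then show "t \<in> {1..k}" using v gs by auto
      qed
    next
      show "{1..k} \<subseteq> g ` set s"
      proof
        fix t assume t: "t \<in> {1..k}"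
        then have "t - 1 < k" "g (s ! (t - 1)) = t" using gs[of "t - 1"] by auto
        moreover have "s ! (t - 1) \<in> set s" using \<open>t - 1 < k\<close> ks' by simp
        ultimately show "t \<in> g ` set s" by (metis image_eqI)
      qed
    qed
    define K where "K a = (lab z a, a)" for a
    have inj: "inj K" by (auto simp: inj_def K_def)
    have s1: "sorted_wrt (<) (map K z)" using kz by (simp add: sorted_wrt_map K_def)
    have "sorted_wrt (\<lambda>a b. K (g a) < K (g b)) y"
    proof (rule sorted_wrt_mono_rel[OF _ ks])
      fix a b assume ab: "a \<in> set y" "b \<in> set y" "(lab \<pi> a, a) < (lab \<pi> b, b)"
      have a': "a \<in> set s" "b \<in> set s" using ab sy ss by auto
      show "K (g a) < K (g b)"
        using ab(3) glab[OF a'(1)] glab[OF a'(2)] gmono[OF a'(1) a'(2)] unfolding K_def by auto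
    qed
    then have s2: "sorted_wrt (<) (map K (map g y))" by (simp add: sorted_wrt_map)
    have e: "set (map g y) = set z" using gimg sy ss sz by simp
    have "set (map K (map g y)) = K ` set (map g y)" by (rule set_map)
    also have "\<dots> = K ` set z" using e by simp
    also have "\<dots> = set (map K z)" by simp
    finally have "set (map K (map g y)) = set (map K z)" .
    then have "map K (map g y) = map K z" using strict_sorted_equal[OF s1 s2] by simp
    then have zg: "z = map g y" using inj_map_eq_map[OF inj, of "map g y" z] by simp
    have "same_order y (map g y)" by (rule so_map) (use gmono sy ss in auto)
    then show "same_order y z" using zg by simp
  qed
qed



declare upt_Suc[simp del]

lemma contains_iff: "contains z x \<longleftrightarrow> (\<exists>K. same_order (nths x K) z)"
proof
  assume "\<exists>K. same_order (nths x K) z"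
  then obtain K where K: "same_order (nths x K) z" by blast
  have "nths x K = nths x (K \<inter> {..<length x})" by (rule nths_cong_len) auto
  then show "contains z x" using K unfolding contains_def occurrence_def by (intro exI[of _ "K \<inter> {..<length x}"]) auto
qed (auto simp: contains_def occurrence_def)

lemma contains_word:
  assumes pp: "is_perm \<pi>" and pz: "is_perm z" and dd: "des z = des \<pi>"
    and I: "I \<subseteq> {..<length \<pi>}"
  shows "contains z (nths \<pi> I) \<longleftrightarrow>
     subseq (map (lab z) [1..<Suc (length z)]) (wd (lab \<pi>) ((!) \<pi> ` I) (length \<pi>))"
proof -
  define V where "V = (!) \<pi> ` I"
  define L where "L = [1..<Suc (length \<pi>)]"
  define u where "u = map (lab z) [1..<Suc (length z)]"
  have dp: "distinct \<pi>" using pp by (simp add: is_perm_def)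
  have "I \<inter> {..<length \<pi>} = I" using I by auto
  then have nf: "nths \<pi> I = filter (\<lambda>v. v \<in> V) \<pi>" using nths_distinct_filter[OF dp, of I] V_def by simp
  have "contains z (nths \<pi> I) \<longleftrightarrow> (\<exists>K. same_order (nths (filter (\<lambda>v. v \<in> V) \<pi>) K) z)"
    unfolding contains_iff nf ..
  also have "\<dots> \<longleftrightarrow> (\<exists>W. same_order (filter (\<lambda>v. v \<in> W) (filter (\<lambda>v. v \<in> V) \<pi>)) z)"
    by (rule ex_nths_filter) (simp add: dp)
  also have "\<dots> \<longleftrightarrow> (\<exists>W. same_order (filter (\<lambda>v. v \<in> V \<and> v \<in> W) \<pi>) z)"
    by simp
  also have "\<dots> \<longleftrightarrow> (\<exists>W. u = map (lab \<pi>) (filter (\<lambda>v. v \<in> V \<and> v \<in> W) L))"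
  proof -
    have "same_order (filter (\<lambda>v. v \<in> V \<and> v \<in> W) \<pi>) z \<longleftrightarrow> u = map (lab \<pi>) (filter (\<lambda>v. v \<in> V \<and> v \<in> W) L)" for W
      using core[OF pp pz dd, of "{v. v \<in> V \<and> v \<in> W}"] unfolding u_def L_def by simp
    then show ?thesis by simp
  qed
  also have "\<dots> \<longleftrightarrow> (\<exists>W. u = map (lab \<pi>) (filter (\<lambda>v. v \<in> W) (filter (\<lambda>v. v \<in> V) L)))"
    by simp
  also have "\<dots> \<longleftrightarrow> (\<exists>N. u = map (lab \<pi>) (nths (filter (\<lambda>v. v \<in> V) L) N))"
    by (rule ex_nths_filter[symmetric]) (simp add: L_def)
  also have "\<dots> \<longleftrightarrow> subseq u (wd (lab \<pi>) V (length \<pi>))"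
    unfolding subseq_conv_nths wd_def L_def nths_map by simp
  finally show ?thesis unfolding u_def V_def .
qed

lemma tails_image:
  assumes pp: "is_perm \<pi>"
  shows "(!) \<pi> ` {i. in_adj_tail \<pi> i} = Tw (lab \<pi>) (length \<pi>)"
proof -
  define n where "n = length \<pi>"
  have dp: "distinct \<pi>" and sp: "set \<pi> = {1..n}" using pp by (auto simp: is_perm_def n_def)
  show ?thesis unfolding n_def[symmetric]
  proof
    show "(!) \<pi> ` {i. in_adj_tail \<pi> i} \<subseteq> Tw (lab \<pi>) n"
    proof
      fix v assume "v \<in> (!) \<pi> ` {i. in_adj_tail \<pi> i}"
      then obtain i where i: "in_adj_tail \<pi> i" "v = \<pi> ! i" by blast
      have i0: "0 < i" "i < n" "\<pi> ! i = \<pi> ! (i - 1) + 1" using i(1) by (auto simp: in_adj_tail_def n_def)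
      have "\<pi> ! (i - 1) \<in> {1..n}" using sp i0 nth_mem[of "i - 1" \<pi>] n_def by auto
      then have v2: "2 \<le> v" "v \<le> n" using i0 i(2) sp nth_mem[of i \<pi>] n_def by auto
      have si: "Suc (i - 1) = i" using i0 by simp
      have "dl \<pi> i = dl \<pi> (i - 1)" using dl_Suc[of \<pi> "i - 1"] i0 si by simp
      moreover have "lab \<pi> v = dl \<pi> i" using lab_nth[OF dp, of i] i0(2) i(2) n_def by simp
      moreover have "v - 1 = \<pi> ! (i - 1)" using i0(3) i(2) by simp
      moreover have "lab \<pi> (\<pi> ! (i - 1)) = dl \<pi> (i - 1)" using lab_nth[OF dp, of "i - 1"] i0(2) n_def by simp
      ultimately show "v \<in> Tw (lab \<pi>) n" using v2 by (simp add: Tw_def)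
    qed
  next
    show "Tw (lab \<pi>) n \<subseteq> (!) \<pi> ` {i. in_adj_tail \<pi> i}"
    proof
      fix v assume "v \<in> Tw (lab \<pi>) n"
      then have v: "2 \<le> v" "v \<le> n" "lab \<pi> v = lab \<pi> (v - 1)" by (auto simp: Tw_def)
      have "v \<in> set \<pi>" "v - 1 \<in> set \<pi>" using v sp by auto
      then obtain i p where ip: "i < n" "\<pi> ! i = v" "p < n" "\<pi> ! p = v - 1"
        using n_def by (auto simp: in_set_conv_nth)
      have dle: "dl \<pi> i = dl \<pi> p" using v(3) lab_nth[OF dp] ip n_def by metis
      have "\<not> i < p"
      proof
        assume "i < p"
        have "p < length \<pi>" using ip(3) n_def by simp
        from dl_eq_inc[OF dp this \<open>i < p\<close> dle] have "\<pi> ! i < \<pi> ! p" .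
        then show False using ip v by simp
      qed
      moreover have "i \<noteq> p" using ip v by auto
      ultimately have pi: "p < i" by simp
      have "p = i - 1"
      proof (rule ccontr)
        assume "p \<noteq> i - 1"
        then have pt: "p < i - 1" "i - 1 < i" using pi by auto
        have "dl \<pi> p \<le> dl \<pi> (i - 1)" "dl \<pi> (i - 1) \<le> dl \<pi> i" using pt by (auto intro: dl_mono)
        then have e1: "dl \<pi> p = dl \<pi> (i - 1)" "dl \<pi> (i - 1) = dl \<pi> i" using dle by auto
        have "\<pi> ! p < \<pi> ! (i - 1)" using dl_eq_inc[OF dp _ pt(1) e1(1)] ip n_def pt by simp
        moreover have "\<pi> ! (i - 1) < \<pi> ! i" using dl_eq_inc[OF dp _ pt(2) e1(2)] ip n_def by simp
        ultimately show False using ip v by simp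
      qed
      then have "in_adj_tail \<pi> i" using pi ip v n_def by (auto simp: in_adj_tail_def)
      then show "v \<in> (!) \<pi> ` {i. in_adj_tail \<pi> i}" using ip by blast
    qed
  qed
qed

lemma tails_iff:
  assumes pp: "is_perm \<pi>" and I: "I \<subseteq> {..<length \<pi>}"
  shows "(\<forall>i. in_adj_tail \<pi> i \<longrightarrow> i \<in> I) \<longleftrightarrow> Tw (lab \<pi>) (length \<pi>) \<subseteq> (!) \<pi> ` I"
proof -
  have dp: "distinct \<pi>" using pp by (simp add: is_perm_def)
  have inj: "inj_on ((!) \<pi>) {..<length \<pi>}" using dp by (simp add: inj_on_nth)
  have A: "{i. in_adj_tail \<pi> i} \<subseteq> {..<length \<pi>}" by (auto simp: in_adj_tail_def)
  have "(\<forall>i. in_adj_tail \<pi> i \<longrightarrow> i \<in> I) \<longleftrightarrow> {i. in_adj_tail \<pi> i} \<subseteq> I" by auto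
  also have "\<dots> \<longleftrightarrow> (!) \<pi> ` {i. in_adj_tail \<pi> i} \<subseteq> (!) \<pi> ` I"
  proof
    assume "{i. in_adj_tail \<pi> i} \<subseteq> I" then show "(!) \<pi> ` {i. in_adj_tail \<pi> i} \<subseteq> (!) \<pi> ` I" by (rule image_mono)
  next
    assume h: "(!) \<pi> ` {i. in_adj_tail \<pi> i} \<subseteq> (!) \<pi> ` I"
    show "{i. in_adj_tail \<pi> i} \<subseteq> I"
    proof
      fix i assume i: "i \<in> {i. in_adj_tail \<pi> i}"
      then have "\<pi> ! i \<in> (!) \<pi> ` I" using h by blast
      moreover have "i \<in> {..<length \<pi>}" using i A by blast
      ultimately show "i \<in> I" using inj_on_image_mem_iff[OF inj _ I] by blast
    qed
  qed
  finally show ?thesis using tails_image[OF pp] by simp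
qed

lemma word_eq_perm:
  assumes pp: "is_perm \<pi>" and pz: "is_perm z" and dd: "des z = des \<pi>"
  shows "map (lab z) [1..<Suc (length z)] = map (lab \<pi>) [1..<Suc (length \<pi>)] \<longleftrightarrow> z = \<pi>"
proof
  assume e: "map (lab z) [1..<Suc (length z)] = map (lab \<pi>) [1..<Suc (length \<pi>)]"
  have "same_order (filter (\<lambda>v. v \<in> UNIV) \<pi>) z" using core[OF pp pz dd, of UNIV] e by simp
  then have "same_order \<pi> z" by simp
  then show "z = \<pi>" using so_perm_eq[OF pp pz] by simp
qed simp

lemma B_sum:
  assumes pp: "is_perm \<pi>" and pz: "is_perm z" and dd: "des z = des \<pi>"
  shows "(\<Sum>I\<in>Pow {..<length \<pi>}. if (\<forall>i. in_adj_tail \<pi> i \<longrightarrow> i \<in> I) \<and> contains z (nths \<pi> I)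
            then (-1::int)^(length \<pi> - card I) else 0) = (if z = \<pi> then 1 else 0)"
proof -
  define n where "n = length \<pi>"
  define u where "u = map (lab z) [1..<Suc (length z)]"
  have dp: "distinct \<pi>" and sp: "set \<pi> = {1..n}" using pp by (auto simp: is_perm_def n_def)
  have bij: "bij_betw (image ((!) \<pi>)) (Pow {..<n}) (Pow {1..n})"
    by (rule bij_betw_Pow, rule bij_betw_nth) (use dp sp n_def in auto)
  have inj: "inj_on ((!) \<pi>) {..<n}" using dp by (simp add: inj_on_nth n_def)
  let ?F = "\<lambda>U. if Tw (lab \<pi>) n \<subseteq> U \<and> subseq u (wd (lab \<pi>) U n) then (-1::int)^(n - card U) else 0"
  have "(\<Sum>I\<in>Pow {..<n}. ?F ((!) \<pi> ` I)) = (\<Sum>U\<in>Pow {1..n}. ?F U)"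
    by (rule sum.reindex_bij_betw[OF bij])
  also have "\<dots> = Phi (lab \<pi>) n u" unfolding Phi_def ..
  also have "\<dots> = (if u = map (lab \<pi>) [1..<Suc n] then 1 else 0)" by (rule Phi_eq)
  also have "\<dots> = (if z = \<pi> then 1 else 0)" using word_eq_perm[OF pp pz dd] unfolding u_def n_def by simp
  finally have X: "(\<Sum>I\<in>Pow {..<n}. ?F ((!) \<pi> ` I)) = (if z = \<pi> then 1 else 0)" .
  have "(\<Sum>I\<in>Pow {..<n}. if (\<forall>i. in_adj_tail \<pi> i \<longrightarrow> i \<in> I) \<and> contains z (nths \<pi> I)
            then (-1::int)^(n - card I) else 0) = (\<Sum>I\<in>Pow {..<n}. ?F ((!) \<pi> ` I))"
  proof (rule sum.cong[OF refl])
    fix I assume "I \<in> Pow {..<n}"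
    then have I: "I \<subseteq> {..<length \<pi>}" using n_def by simp
    have "card ((!) \<pi> ` I) = card I" using card_image[OF inj_on_subset[OF inj]] I n_def by simp
    then show "(if (\<forall>i. in_adj_tail \<pi> i \<longrightarrow> i \<in> I) \<and> contains z (nths \<pi> I)
            then (-1::int)^(n - card I) else 0) = ?F ((!) \<pi> ` I)"
      using tails_iff[OF pp I] contains_word[OF pp pz dd I] u_def n_def by simp
  qed
  from this X show ?thesis unfolding n_def by (simp only:)
qed



declare upt_Suc[simp del]

lemma eq_supp_filter:
  "length a = length b \<Longrightarrow> (\<forall>i<length a. (a ! i \<noteq> 0) \<longleftrightarrow> (b ! i \<noteq> 0)) \<Longrightarrow>
   filter (\<lambda>x. x \<noteq> (0::nat)) a = filter (\<lambda>x. x \<noteq> 0) b \<Longrightarrow> a = b"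
proof (induction a arbitrary: b)
  case Nil then show ?case by simp
next
  case (Cons x a)
  then obtain y b' where b: "b = y # b'" by (cases b) auto
  have l: "length a = length b'" using Cons.prems b by simp
  have s: "\<forall>i<length a. (a ! i \<noteq> 0) \<longleftrightarrow> (b' ! i \<noteq> 0)" using Cons.prems(2) b by auto
  have xy: "(x \<noteq> 0) \<longleftrightarrow> (y \<noteq> 0)" using Cons.prems(2) b by force
  show ?case
  proof (cases "x = 0")
    case True
    then have "y = 0" using xy by simp
    then show ?thesis using Cons.IH[OF l s] Cons.prems(3) b True by simp
  next
    case False
    then have "y \<noteq> 0" using xy by simp
    then show ?thesis using Cons.IH[OF l s] Cons.prems(3) b False by simp
  qed
qed

lemma build_emb:
  "I \<subseteq> {..<n} \<Longrightarrow> length w = card I \<Longrightarrow> 0 \<notin> set w \<Longrightarrow>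
   \<exists>\<eta>. length \<eta> = n \<and> (\<forall>i<n. (\<eta> ! i \<noteq> 0) \<longleftrightarrow> i \<in> I) \<and> filter (\<lambda>x. x \<noteq> (0::nat)) \<eta> = w"
proof (induction n arbitrary: I w)
  case 0 then show ?case by (intro exI[of _ "[]"]) auto
next
  case (Suc n)
  show ?case
  proof (cases "n \<in> I")
    case True
    define I' where "I' = I - {n}"
    have I': "I' \<subseteq> {..<n}" using Suc.prems(1) I'_def by auto
    have fin: "finite I" using Suc.prems(1) finite_subset by blast
    have cI: "card I = Suc (card I')" using card_Suc_Diff1[OF fin True] I'_def by simp
    then obtain w' x where w: "w = w' @ [x]" using Suc.prems(2) by (cases w rule: rev_exhaust) auto
    have lw: "length w' = card I'" using Suc.prems(2) cI w by simp
    have x0: "x \<noteq> 0" "0 \<notin> set w'" using Suc.prems(3) w by auto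
    obtain \<eta> where \<eta>: "length \<eta> = n" "\<forall>i<n. (\<eta> ! i \<noteq> 0) \<longleftrightarrow> i \<in> I'" "filter (\<lambda>x. x \<noteq> 0) \<eta> = w'"
      using Suc.IH[OF I' lw x0(2)] by blast
    show ?thesis
    proof (intro exI[of _ "\<eta> @ [x]"] conjI allI impI)
      show "length (\<eta> @ [x]) = Suc n" using \<eta> by simp
      show "filter (\<lambda>x. x \<noteq> 0) (\<eta> @ [x]) = w" using \<eta> w x0 by simp
      fix i assume i: "i < Suc n"
      show "((\<eta> @ [x]) ! i \<noteq> 0) \<longleftrightarrow> i \<in> I"
      proof (cases "i < n")
        case True then show ?thesis using \<eta> I'_def by (simp add: nth_append)
      next
        case False then have "i = n" using i by simp
        then show ?thesis using \<eta> x0 True by (simp add: nth_append)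
      qed
    qed
  next
    case False
    have I': "I \<subseteq> {..<n}" using Suc.prems(1) False by (auto simp: less_Suc_eq)
    obtain \<eta> where \<eta>: "length \<eta> = n" "\<forall>i<n. (\<eta> ! i \<noteq> 0) \<longleftrightarrow> i \<in> I" "filter (\<lambda>x. x \<noteq> 0) \<eta> = w"
      using Suc.IH[OF I' Suc.prems(2,3)] by blast
    show ?thesis
    proof (intro exI[of _ "\<eta> @ [0]"] conjI allI impI)
      show "length (\<eta> @ [0]) = Suc n" using \<eta> by simp
      show "filter (\<lambda>x. x \<noteq> 0) (\<eta> @ [0]) = w" using \<eta> by simp
      fix i assume i: "i < Suc n"
      show "((\<eta> @ [0]) ! i \<noteq> 0) \<longleftrightarrow> i \<in> I"
      proof (cases "i < n")
        case True then show ?thesis using \<eta> by (simp add: nth_append)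
      next
        case False then have "i = n" using i by simp
        then show ?thesis using \<eta> False \<open>n \<notin> I\<close> by (simp add: nth_append)
      qed
    qed
  qed
qed

definition Iset :: "nat list \<Rightarrow> nat list \<Rightarrow> nat set set" where
  "Iset w \<pi> = {I \<in> Pow {..<length \<pi>}. (\<forall>i. in_adj_tail \<pi> i \<longrightarrow> i \<in> I) \<and> same_order (nths \<pi> I) w}"

lemma NE_card:
  assumes pp: "is_perm \<pi>" and pw: "is_perm w"
  shows "card (normal_embeddings w \<pi>) = card (Iset w \<pi>)"
proof -
  define n where "n = length \<pi>"
  define supp where "supp \<eta> = {i. i < length \<eta> \<and> \<eta> ! i \<noteq> (0::nat)}" for \<eta>
  have "bij_betw supp (normal_embeddings w \<pi>) (Iset w \<pi>)"
    unfolding bij_betw_def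
  proof (intro conjI)
    show "inj_on supp (normal_embeddings w \<pi>)"
    proof (rule inj_onI)
      fix a b assume a: "a \<in> normal_embeddings w \<pi>" and b: "b \<in> normal_embeddings w \<pi>" and e: "supp a = supp b"
      have la: "length a = n" "filter (\<lambda>x. x \<noteq> 0) a = w" using a by (auto simp: normal_embeddings_def embeddings_def n_def)
      have lb: "length b = n" "filter (\<lambda>x. x \<noteq> 0) b = w" using b by (auto simp: normal_embeddings_def embeddings_def n_def)
      have "\<forall>i<length a. (a ! i \<noteq> 0) \<longleftrightarrow> (b ! i \<noteq> 0)"
      proof (intro allI impI)
        fix i assume "i < length a"
        moreover have "i \<in> supp a \<longleftrightarrow> i \<in> supp b" using e by simp
        ultimately show "(a ! i \<noteq> 0) \<longleftrightarrow> (b ! i \<noteq> 0)" using la lb unfolding supp_def by simp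
      qed
      then show "a = b" using eq_supp_filter la lb by simp
    qed
  next
    show "supp ` normal_embeddings w \<pi> = Iset w \<pi>"
    proof
      show "supp ` normal_embeddings w \<pi> \<subseteq> Iset w \<pi>"
      proof
        fix I assume "I \<in> supp ` normal_embeddings w \<pi>"
        then obtain \<eta> where \<eta>: "\<eta> \<in> normal_embeddings w \<pi>" "I = supp \<eta>" by blast
        have h: "length \<eta> = length \<pi>" "occurrence w \<pi> (supp \<eta>)" "\<forall>i. in_adj_tail \<pi> i \<longrightarrow> \<eta> ! i \<noteq> 0"
          using \<eta>(1) unfolding normal_embeddings_def embeddings_def supp_def by auto
        have "\<forall>i. in_adj_tail \<pi> i \<longrightarrow> i \<in> I"
          using h(1,3) \<eta>(2) unfolding supp_def in_adj_tail_def by auto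
        then show "I \<in> Iset w \<pi>" using h(2) \<eta>(2) unfolding Iset_def occurrence_def by auto
      qed
    next
      show "Iset w \<pi> \<subseteq> supp ` normal_embeddings w \<pi>"
      proof
        fix I assume I: "I \<in> Iset w \<pi>"
        then have I1: "I \<subseteq> {..<n}" and I2: "\<forall>i. in_adj_tail \<pi> i \<longrightarrow> i \<in> I"
          and I3: "same_order (nths \<pi> I) w" unfolding Iset_def n_def by auto
        have lw: "length w = card I" using so_length[OF I3] length_nths_sub[of I \<pi>] I1 n_def by simp
        have w0: "0 \<notin> set w" using pw by (auto simp: is_perm_def)
        obtain \<eta> where \<eta>: "length \<eta> = n" "\<forall>i<n. (\<eta> ! i \<noteq> 0) \<longleftrightarrow> i \<in> I" "filter (\<lambda>x. x \<noteq> 0) \<eta> = w"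
          using build_emb[OF I1 lw w0] by blast
        have sI: "supp \<eta> = I" using \<eta>(1,2) I1 unfolding supp_def by auto
        have "\<eta> \<in> normal_embeddings w \<pi>"
          unfolding normal_embeddings_def embeddings_def
        proof (intro CollectI conjI allI impI)
          show "length \<eta> = length \<pi>" using \<eta> n_def by simp
          show "occurrence w \<pi> {i. i < length \<eta> \<and> \<eta> ! i \<noteq> 0}"
            using sI I1 I3 n_def unfolding supp_def occurrence_def by simp
          show "filter (\<lambda>x. x \<noteq> 0) \<eta> = w" by (rule \<eta>(3))
          fix i assume "in_adj_tail \<pi> i"
          then show "\<eta> ! i \<noteq> 0" using I2 \<eta>(2) n_def by (auto simp: in_adj_tail_def)
        qed
        then show "I \<in> supp ` normal_embeddings w \<pi>" using sI by blast
      qed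
    qed
  qed
  then show ?thesis by (rule bij_betw_same_card)
qed

lemma std_exists:
  assumes "distinct x"
  shows "\<exists>w. is_perm w \<and> same_order x w"
proof -
  define g where "g v = card {u \<in> set x. u \<le> v}" for v
  have fin: "finite {u \<in> set x. u \<le> v}" for v by simp
  have mono: "g a < g b" if "a \<in> set x" "b \<in> set x" "a < b" for a b
  proof -
    have m1: "b \<in> {u \<in> set x. u \<le> b}" "b \<notin> {u \<in> set x. u \<le> a}" using that by auto
    have m2: "{u \<in> set x. u \<le> a} \<subseteq> {u \<in> set x. u \<le> b}" using that by auto
    have "{u \<in> set x. u \<le> a} \<subset> {u \<in> set x. u \<le> b}" using m1 m2 by blast
    then show ?thesis unfolding g_def by (rule psubset_card_mono[OF fin])
  qed
  have so: "same_order x (map g x)" by (rule so_map) (use mono in auto)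
  have inj: "inj_on g (set x)"
  proof (rule inj_onI)
    fix a b assume "a \<in> set x" "b \<in> set x" "g a = g b"
    then show "a = b" using mono[of a b] mono[of b a] by (cases rule: linorder_cases[of a b]) auto
  qed
  have dw: "distinct (map g x)" using assms inj by (simp add: distinct_map)
  have sub: "g ` set x \<subseteq> {1..length x}"
  proof
    fix t assume "t \<in> g ` set x"
    then obtain v where v: "v \<in> set x" "t = g v" by blast
    have "v \<in> {u \<in> set x. u \<le> v}" using v by simp
    then have "1 \<le> t" using v fin[of v] unfolding g_def by (metis card_0_eq empty_iff less_one not_le)
    moreover have "t \<le> card (set x)" unfolding v(2) g_def by (rule card_mono) auto
    ultimately show "t \<in> {1..length x}" using distinct_card[OF assms] by simp
  qed
  have "card (g ` set x) = length x" using card_image[OF inj] distinct_card[OF assms] by simp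
  then have "g ` set x = {1..length x}" using card_subset_eq[OF _ sub] by simp
  then have "is_perm (map g x)" using dw by (simp add: is_perm_def)
  then show ?thesis using so by blast
qed



declare upt_Suc[simp del]

lemma interval_finite: "finite {w. is_perm w \<and> contains z w \<and> contains w \<pi>}"
proof (rule finite_subset)
  show "{w. is_perm w \<and> contains z w \<and> contains w \<pi>} \<subseteq> {xs. set xs \<subseteq> {1..length \<pi>} \<and> length xs \<le> length \<pi>}"
  proof
    fix w assume "w \<in> {w. is_perm w \<and> contains z w \<and> contains w \<pi>}"
    then have "is_perm w" "length w \<le> length \<pi>" using contains_len by auto
    then show "w \<in> {xs. set xs \<subseteq> {1..length \<pi>} \<and> length xs \<le> length \<pi>}" by (auto simp: is_perm_def)
  qed
  show "finite {xs. set xs \<subseteq> {1..length \<pi>} \<and> length xs \<le> length \<pi>}"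
    by (rule finite_lists_length_le) simp
qed

lemma A_sum:
  assumes pp: "is_perm \<pi>"
  shows "(\<Sum>w\<in>{w. is_perm w \<and> contains z w \<and> contains w \<pi>}.
            (-1::int)^(length \<pi> - length w) * int (card (normal_embeddings w \<pi>)))
       = (\<Sum>I\<in>Pow {..<length \<pi>}. if (\<forall>i. in_adj_tail \<pi> i \<longrightarrow> i \<in> I) \<and> contains z (nths \<pi> I)
            then (-1::int)^(length \<pi> - card I) else 0)"
proof -
  define n where "n = length \<pi>"
  define P where "P = {w. is_perm w \<and> contains z w \<and> contains w \<pi>}"
  define f where "f I = (-1::int)^(n - card I)" for I :: "nat set"
  have dp: "distinct \<pi>" using pp by (simp add: is_perm_def)
  have finP: "finite P" unfolding P_def by (rule interval_finite)
  have finI: "finite (Iset w \<pi>)" for w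
    by (rule finite_subset[of _ "Pow {..<length \<pi>}"]) (auto simp: Iset_def)
  have step1: "(-1::int)^(n - length w) * int (card (normal_embeddings w \<pi>)) = sum f (Iset w \<pi>)"
    if w: "w \<in> P" for w
  proof -
    have pw: "is_perm w" using w P_def by simp
    have "sum f (Iset w \<pi>) = (\<Sum>I\<in>Iset w \<pi>. (-1::int)^(n - length w))"
    proof (rule sum.cong[OF refl])
      fix I assume "I \<in> Iset w \<pi>"
      then have "I \<subseteq> {..<length \<pi>}" "same_order (nths \<pi> I) w" by (auto simp: Iset_def)
      then have "card I = length w" using so_length length_nths_sub by metis
      then show "f I = (-1::int)^(n - length w)" by (simp add: f_def)
    qed
    also have "\<dots> = int (card (Iset w \<pi>)) * (-1::int)^(n - length w)" by simp
    finally show ?thesis using NE_card[OF pp pw] by simp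
  qed
  have "(\<Sum>w\<in>P. (-1::int)^(n - length w) * int (card (normal_embeddings w \<pi>))) = (\<Sum>w\<in>P. sum f (Iset w \<pi>))"
    using step1 by (rule sum.cong[OF refl])
  also have "\<dots> = sum f (\<Union>w\<in>P. Iset w \<pi>)"
  proof (rule sum.UNION_disjoint[symmetric, OF finP])
    show "\<forall>w\<in>P. finite (Iset w \<pi>)" using finI by blast
    show "\<forall>w1\<in>P. \<forall>w2\<in>P. w1 \<noteq> w2 \<longrightarrow> Iset w1 \<pi> \<inter> Iset w2 \<pi> = {}"
    proof (intro ballI impI)
      fix w1 w2 assume w: "w1 \<in> P" "w2 \<in> P" "w1 \<noteq> w2"
      show "Iset w1 \<pi> \<inter> Iset w2 \<pi> = {}"
      proof (rule ccontr)
        assume "Iset w1 \<pi> \<inter> Iset w2 \<pi> \<noteq> {}"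
        then obtain I where "I \<in> Iset w1 \<pi>" "I \<in> Iset w2 \<pi>" by blast
        then have "same_order (nths \<pi> I) w1" "same_order (nths \<pi> I) w2" by (auto simp: Iset_def)
        then have "same_order w1 w2" using so_sym so_trans by blast
        then have "w1 = w2" using so_perm_eq w unfolding P_def by blast
        then show False using w by simp
      qed
    qed
  qed
  also have "(\<Union>w\<in>P. Iset w \<pi>) = {I \<in> Pow {..<n}. (\<forall>i. in_adj_tail \<pi> i \<longrightarrow> i \<in> I) \<and> contains z (nths \<pi> I)}"
  proof
    show "(\<Union>w\<in>P. Iset w \<pi>) \<subseteq> {I \<in> Pow {..<n}. (\<forall>i. in_adj_tail \<pi> i \<longrightarrow> i \<in> I) \<and> contains z (nths \<pi> I)}"
    proof
      fix I assume "I \<in> (\<Union>w\<in>P. Iset w \<pi>)"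
      then obtain w where w: "w \<in> P" "I \<in> Iset w \<pi>" by blast
      then have I: "I \<subseteq> {..<n}" "\<forall>i. in_adj_tail \<pi> i \<longrightarrow> i \<in> I" "same_order (nths \<pi> I) w"
        by (auto simp: Iset_def n_def)
      have "contains z w" using w(1) P_def by simp
      then have "contains z (nths \<pi> I)" using contains_so[OF I(3)] dp by simp
      then show "I \<in> {I \<in> Pow {..<n}. (\<forall>i. in_adj_tail \<pi> i \<longrightarrow> i \<in> I) \<and> contains z (nths \<pi> I)}"
        using I by simp
    qed
  next
    show "{I \<in> Pow {..<n}. (\<forall>i. in_adj_tail \<pi> i \<longrightarrow> i \<in> I) \<and> contains z (nths \<pi> I)} \<subseteq> (\<Union>w\<in>P. Iset w \<pi>)"
    proof
      fix I assume "I \<in> {I \<in> Pow {..<n}. (\<forall>i. in_adj_tail \<pi> i \<longrightarrow> i \<in> I) \<and> contains z (nths \<pi> I)}"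
      then have I: "I \<subseteq> {..<n}" "\<forall>i. in_adj_tail \<pi> i \<longrightarrow> i \<in> I" "contains z (nths \<pi> I)" by auto
      obtain w where w: "is_perm w" "same_order (nths \<pi> I) w" using std_exists[of "nths \<pi> I"] dp by auto
      have "contains z w" using contains_so[OF so_sym[OF w(2)] I(3)] w(1) by (simp add: is_perm_def)
      moreover have "contains w \<pi>" using I(1) w(2) n_def unfolding contains_def occurrence_def by blast
      ultimately have "w \<in> P" using w(1) P_def by simp
      moreover have "I \<in> Iset w \<pi>" using I w n_def by (simp add: Iset_def)
      ultimately show "I \<in> (\<Union>w\<in>P. Iset w \<pi>)" by blast
    qed
  qed
  also have "sum f {I \<in> Pow {..<n}. (\<forall>i. in_adj_tail \<pi> i \<longrightarrow> i \<in> I) \<and> contains z (nths \<pi> I)}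
     = (\<Sum>I\<in>Pow {..<n}. if (\<forall>i. in_adj_tail \<pi> i \<longrightarrow> i \<in> I) \<and> contains z (nths \<pi> I) then f I else 0)"
    by (rule sum.inter_filter) simp
  finally show ?thesis unfolding f_def n_def P_def .
qed

lemma mu_sum:
  assumes pa: "is_perm a" and pw: "is_perm w" and c: "contains a w"
  shows "(\<Sum>z\<in>{z. is_perm z \<and> contains a z \<and> contains z w}. pmu a z) = (if a = w then 1 else 0)"
proof (cases "a = w")
  case True
  have "{z. is_perm z \<and> contains a z \<and> contains z w} = {a}"
  proof
    show "{z. is_perm z \<and> contains a z \<and> contains z w} \<subseteq> {a}"
    proof
      fix z assume z: "z \<in> {z. is_perm z \<and> contains a z \<and> contains z w}"
      then have "length z = length a" using contains_len True by (metis (mono_tags) mem_Collect_eq le_antisym)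
      then have "a = z" using contains_eq z pa by auto
      then show "z \<in> {a}" by simp
    qed
    show "{a} \<subseteq> {z. is_perm z \<and> contains a z \<and> contains z w}" using pa True contains_refl by auto
  qed
  moreover have "pmu a a = 1" by (subst pmu.simps) simp
  ultimately show ?thesis using True by simp
next
  case False
  define D where "D = {z. is_perm z \<and> contains a z \<and> contains z w \<and> z \<noteq> w \<and> length z < length w}"
  have S: "{z. is_perm z \<and> contains a z \<and> contains z w} = insert w D"
  proof
    show "{z. is_perm z \<and> contains a z \<and> contains z w} \<subseteq> insert w D"
    proof
      fix z assume z: "z \<in> {z. is_perm z \<and> contains a z \<and> contains z w}"
      show "z \<in> insert w D"
      proof (cases "z = w")
        case True then show ?thesis by simp
      next
        case F: False
        then have "length z < length w" using contains_lt z pw by auto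
        then show ?thesis using z F D_def by simp
      qed
    qed
    show "insert w D \<subseteq> {z. is_perm z \<and> contains a z \<and> contains z w}"
      using pw c contains_refl D_def by auto
  qed
  have finD: "finite D"
    by (rule finite_subset[OF _ interval_finite[of a w]]) (auto simp: D_def)
  have wD: "w \<notin> D" by (simp add: D_def)
  have "pmu a w = - (\<Sum>z\<in>D. pmu a z)"
    by (subst pmu.simps) (simp add: False c D_def)
  then show ?thesis unfolding S using finD wD False by simp
qed



declare pmu.simps[simp del]

theorem mainTheorem6:
  assumes "is_perm \<sigma>" and "is_perm \<pi>" and "des \<sigma> = des \<pi>"
  shows "pmu \<sigma> \<pi> = (-1) ^ (length \<pi> - length \<sigma>) * int (card (normal_embeddings \<sigma> \<pi>))"
proof (cases "contains \<sigma> \<pi>")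
  case False
  have ne: "\<sigma> \<noteq> \<pi>" using False contains_refl by auto
  have "normal_embeddings \<sigma> \<pi> = {}"
  proof (rule ccontr)
    assume "normal_embeddings \<sigma> \<pi> \<noteq> {}"
    then obtain \<eta> where "\<eta> \<in> normal_embeddings \<sigma> \<pi>" by blast
    then have "\<exists>I. occurrence \<sigma> \<pi> I"
      unfolding normal_embeddings_def embeddings_def by blast
    then show False using False unfolding contains_def by blast
  qed
  moreover have "pmu \<sigma> \<pi> = 0" by (subst pmu.simps) (simp add: ne False del: pmu.simps)
  ultimately show ?thesis by simp
next
  case True
  note ps = assms(1) and pp = assms(2) and dd = assms(3)
  have dp: "distinct \<pi>" using pp by (simp add: is_perm_def)
  define P where "P = {w. is_perm w \<and> contains \<sigma> w \<and> contains w \<pi>}"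
  define g where "g w = (-1::int) ^ (length \<pi> - length w) * int (card (normal_embeddings w \<pi>))" for w
  have finP: "finite P" unfolding P_def by (rule interval_finite)
  have piP: "\<pi> \<in> P" using pp True contains_refl P_def by simp
  have desP: "des w = des \<pi>" if "w \<in> P" for w
  proof -
    have w: "is_perm w" "contains \<sigma> w" "contains w \<pi>" using that P_def by auto
    have "des \<sigma> \<le> des w" using contains_des[OF w(2)] w(1) by (simp add: is_perm_def)
    moreover have "des w \<le> des \<pi>" using contains_des[OF w(3) dp] .
    ultimately show ?thesis using dd by simp
  qed
  have Bz: "(\<Sum>w\<in>{w \<in> P. contains z w}. g w) = (if z = \<pi> then 1 else 0)" if z: "z \<in> P" for z
  proof -
    have zz: "is_perm z" "contains \<sigma> z" "contains z \<pi>" using z P_def by auto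
    have "{w \<in> P. contains z w} = {w. is_perm w \<and> contains z w \<and> contains w \<pi>}"
      using zz contains_trans P_def by (auto simp: is_perm_def)
    then have "(\<Sum>w\<in>{w \<in> P. contains z w}. g w) = (\<Sum>w\<in>{w. is_perm w \<and> contains z w \<and> contains w \<pi>}. g w)"
      by simp
    also have "\<dots> = (\<Sum>I\<in>Pow {..<length \<pi>}. if (\<forall>i. in_adj_tail \<pi> i \<longrightarrow> i \<in> I) \<and> contains z (nths \<pi> I)
            then (-1::int)^(length \<pi> - card I) else 0)"
      unfolding g_def by (rule A_sum[OF pp])
    also have "\<dots> = (if z = \<pi> then 1 else 0)" by (rule B_sum[OF pp zz(1) desP[OF z]])
    finally show ?thesis .
  qed
  have Aw: "(\<Sum>z\<in>{z \<in> P. contains z w}. pmu \<sigma> z) = (if \<sigma> = w then 1 else 0)" if w: "w \<in> P" for w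
  proof -
    have ww: "is_perm w" "contains \<sigma> w" "contains w \<pi>" using w P_def by auto
    have "{z \<in> P. contains z w} = {z. is_perm z \<and> contains \<sigma> z \<and> contains z w}"
      using ww contains_trans dp P_def by auto
    then show ?thesis using mu_sum[OF ps ww(1,2)] by simp
  qed
  have "pmu \<sigma> \<pi> = (\<Sum>z\<in>P. if z = \<pi> then pmu \<sigma> z else 0)"
    using piP finP by (simp add: sum.delta)
  also have "\<dots> = (\<Sum>z\<in>P. pmu \<sigma> z * (\<Sum>w\<in>{w \<in> P. contains z w}. g w))"
    by (rule sum.cong[OF refl]) (simp add: Bz)
  also have "\<dots> = (\<Sum>z\<in>P. \<Sum>w\<in>{w \<in> P. contains z w}. pmu \<sigma> z * g w)"
    by (simp add: sum_distrib_left)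
  also have "\<dots> = (\<Sum>w\<in>P. \<Sum>z\<in>{z \<in> P. contains z w}. pmu \<sigma> z * g w)"
    by (rule sum.swap_restrict[OF finP finP])
  also have "\<dots> = (\<Sum>w\<in>P. (\<Sum>z\<in>{z \<in> P. contains z w}. pmu \<sigma> z) * g w)"
    by (simp add: sum_distrib_right)
  also have "\<dots> = (\<Sum>w\<in>P. if \<sigma> = w then g w else 0)"
    by (rule sum.cong[OF refl]) (simp add: Aw)
  also have "\<dots> = g \<sigma>"
  proof -
    have "\<sigma> \<in> P" using ps True contains_refl P_def by simp
    then show ?thesis using finP by (simp add: sum.delta)
  qed
  finally show ?thesis unfolding g_def .
qed

end
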